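(* Let $\kappa$ be a regular uncountable cardinal. Suppose that $\curlywedge^-(\sigma,\kappa,NS_\kappa|S)$ holds, where $\sigma$ is a regular uncountable cardinal less than $\kappa$ and $S$ is a stationary subset of $E^\kappa_{<\sigma}$. Then $\mathrm{cov}(\kappa,\sigma,\sigma,2)=\kappa$.
   Context: $acc(\kappa)$ is the set of nonzero limit ordinals below $\kappa$; $E^\kappa_{<\sigma} = \{\alpha\in acc(\kappa) : \mathrm{cf}(\alpha)<\sigma\}$; $NS_\kappa|S = \{B\subseteq\kappa : B\cap S\text{ nonstationary}\}$, with $(NS_\kappa|S)^+$ its complement in $P(\kappa)$. $P_\rho(X)=\{x\subseteq X:|x|<\rho\}$. For an infinite cardinal $\sigma$ and a limit ordinal $\delta\geq\sigma$, a subset $C$ of $P_\sigma(\delta)$ is a generalized club if there is $F:P_\omega(\delta)\to\delta$ with $\{x\in P_\sigma(\delta):F``P_\omega(x)\subseteq x\}\subseteq C$. $\curlywedge^-(\sigma,\kappa,J)$ asserts the existence, for $i\in\delta\in acc(\kappa)\setminus\sigma$, of a cofinal subset $C^i_\delta$ of $(P_\sigma(\delta),\subseteq)$ such that $\{\delta:\exists i<\delta\,(C^i_\delta\subseteq D)\}\in J^+$ for every generalized club $D\subseteq P_\sigma(\kappa)$. For cardinals $\rho_1\geq\rho_2\geq\rho_3\geq\omega$, $\rho_3\geq\rho_4\geq2$, $\mathrm{cov}(\rho_1,\rho_2,\rho_3,\rho_4)$ is the least cardinality of $Z\subseteq P_{\rho_2}(\rho_1)$ such that every $a\in P_{\rho_3}(\rho_1)$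 is covered by the union of some $Q\in P_{\rho_4}(Z)$. *)

theory Defs
  imports Main "HOL-Library.Countable_Set"
begin

unbundle cardinal_syntax

text \<open>Convention: the regular cardinal kappa is represented by a relation r on a type 'a
  with card_order r, i.e. r is a well-order of all of 'a which is an initial ordinal.
  Ordinals below kappa are the elements of 'a, ordered by r.  A cardinal sigma < kappa is
  represented by an element s of 'a whose initial segment underS r s is an initial ordinal;
  its cardinality is the cardinal (card_of (underS r s)).\<close>

definition olt :: "'a rel \<Rightarrow> 'a \<Rightarrow> 'a \<Rightarrow> bool" where
  "olt r a b \<longleftrightarrow> (a, b) \<in> r \<and> a \<noteq> b"

definition is_limit :: "'a rel \<Rightarrow> 'a \<Rightarrow> bool" where
  "is_limit r \<alpha> \<longleftrightarrow> (\<exists>\<beta>. olt r \<beta> \<alpha>) \<and> (\<forall>\<beta>. olt r \<beta> \<alpha> \<longrightarrow> (\<exists>\<gamma>. olt r \<beta> \<gamma> \<and> olt r \<gamma> \<alpha>))"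

definition acc :: "'a rel \<Rightarrow> 'a set" where
  "acc r = {\<alpha>. is_limit r \<alpha>}"

definition cf_less :: "'a rel \<Rightarrow> 'a \<Rightarrow> 'a \<Rightarrow> bool" where
  "cf_less r \<alpha> s \<longleftrightarrow> (\<exists>X. X \<subseteq> underS r \<alpha> \<and> (\<forall>\<beta>. olt r \<beta> \<alpha> \<longrightarrow> (\<exists>\<gamma>\<in>X. (\<beta>, \<gamma>) \<in> r))
      \<and> card_of X <o (card_of (underS r s)))"

definition E_less :: "'a rel \<Rightarrow> 'a \<Rightarrow> 'a set" where
  "E_less r s = {\<alpha> \<in> acc r. cf_less r \<alpha> s}"

definition club :: "'a rel \<Rightarrow> 'a set \<Rightarrow> bool" where
  "club r C \<longleftrightarrow> (\<forall>\<beta>. \<exists>\<gamma>\<in>C. (\<beta>, \<gamma>) \<in> r)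
     \<and> (\<forall>\<alpha>. is_limit r \<alpha> \<longrightarrow> (\<forall>\<beta>. olt r \<beta> \<alpha> \<longrightarrow> (\<exists>\<gamma>\<in>C. olt r \<beta> \<gamma> \<and> olt r \<gamma> \<alpha>)) \<longrightarrow> \<alpha> \<in> C)"

definition stationary :: "'a rel \<Rightarrow> 'a set \<Rightarrow> bool" where
  "stationary r S \<longleftrightarrow> (\<forall>C. club r C \<longrightarrow> S \<inter> C \<noteq> {})"

definition NS_restr :: "'a rel \<Rightarrow> 'a set \<Rightarrow> 'a set set" where
  "NS_restr r S = {B. \<not> stationary r (B \<inter> S)}"

definition NS_restr_pos :: "'a rel \<Rightarrow> 'a set \<Rightarrow> 'a set set" where
  "NS_restr_pos r S = UNIV - NS_restr r S"

definition P_lt :: "'a set \<Rightarrow> 'b rel \<Rightarrow> 'a set set" where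
  "P_lt A \<rho> = {x. x \<subseteq> A \<and> card_of x <o \<rho>}"

definition subset_cofinal :: "'a set set \<Rightarrow> 'a set set \<Rightarrow> bool" where
  "subset_cofinal C P \<longleftrightarrow> C \<subseteq> P \<and> (\<forall>x\<in>P. \<exists>y\<in>C. x \<subseteq> y)"

definition gen_club :: "'b rel \<Rightarrow> 'a set \<Rightarrow> 'a set set \<Rightarrow> bool" where
  "gen_club \<sigma> A C \<longleftrightarrow> C \<subseteq> P_lt A \<sigma> \<and>
     (\<exists>F :: 'a set \<Rightarrow> 'a. (\<forall>y. finite y \<and> y \<subseteq> A \<longrightarrow> F y \<in> A) \<and>
        {x \<in> P_lt A \<sigma>. \<forall>y. finite y \<and> y \<subseteq> x \<longrightarrow> F y \<in> x} \<subseteq> C)"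

definition curlywedge_minus :: "'a rel \<Rightarrow> 'a \<Rightarrow> 'a set \<Rightarrow> bool" where
  "curlywedge_minus r s S \<longleftrightarrow>
    (\<exists>C :: 'a \<Rightarrow> 'a \<Rightarrow> 'a set set.
      (\<forall>\<delta> i. \<delta> \<in> acc r \<and> (s, \<delta>) \<in> r \<and> olt r i \<delta> \<longrightarrow>
          subset_cofinal (C i \<delta>) (P_lt (underS r \<delta>) (card_of (underS r s))))
      \<and> (\<forall>D. gen_club (card_of (underS r s)) UNIV D \<longrightarrow>
          {\<delta> \<in> acc r. (s, \<delta>) \<in> r \<and> (\<exists>i. olt r i \<delta> \<and> C i \<delta> \<subseteq> D)} \<in> NS_restr_pos r S))"

definition cov_family :: "'a set \<Rightarrow> 'b rel \<Rightarrow> 'c rel \<Rightarrow> 'd rel \<Rightarrow> 'a set set \<Rightarrow> bool" where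
  "cov_family A \<rho>2 \<rho>3 \<rho>4 Z \<longleftrightarrow> Z \<subseteq> P_lt A \<rho>2 \<and>
     (\<forall>a\<in>P_lt A \<rho>3. \<exists>Q. Q \<subseteq> Z \<and> card_of Q <o \<rho>4 \<and> a \<subseteq> \<Union>Q)"

definition cov_eq :: "'a set \<Rightarrow> 'b rel \<Rightarrow> 'c rel \<Rightarrow> 'd rel \<Rightarrow> 'e rel \<Rightarrow> bool" where
  "cov_eq A \<rho>2 \<rho>3 \<rho>4 \<theta> \<longleftrightarrow>
     (\<exists>Z. cov_family A \<rho>2 \<rho>3 \<rho>4 Z \<and> card_of Z =o \<theta>) \<and>
     (\<forall>Z. cov_family A \<rho>2 \<rho>3 \<rho>4 Z \<longrightarrow> \<theta> \<le>o card_of Z)"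

definition sigma_card :: "'a rel \<Rightarrow> 'a \<Rightarrow> 'a rel" where
  "sigma_card r s = (card_of (underS r s))"

end

theory Submission
  imports Defs
begin

lemma wo_facts:
  assumes "card_order r"
  shows "trans r" "antisym r" "refl r" "Card_order r" "Field r = UNIV"
    "\<forall>a b. (a,b) \<in> r \<or> (b,a) \<in> r"
proof -
  have c: "UNIV = Field r \<and> Card_order r" by (rule card_order_on_Card_order[OF assms])
  show Cr: "Card_order r" using c by (rule conjunct2)
  show Fr: "Field r = UNIV" using c by simp
  have wr: "wo_rel r" by (rule Card_order_wo_rel[OF Cr])
  show "trans r" by (rule wo_rel.TRANS[OF wr])
  show "antisym r" by (rule wo_rel.ANTISYM[OF wr])
  show "refl r" using wo_rel.REFL[OF wr] Fr by simp
  show "\<forall>a b. (a,b) \<in> r \<or> (b,a) \<in> r" using wo_rel.TOTALS[OF wr] Fr by simp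
qed

lemma singl_less_ctwo: "|{z}| <o ctwo"
proof -
  have nle: "\<not> |UNIV :: bool set| \<le>o |{z}|"
  proof
    assume "|UNIV :: bool set| \<le>o |{z}|"
    then have "\<exists>f. inj_on f (UNIV :: bool set) \<and> f ` UNIV \<subseteq> {z}" by (simp only: card_of_ordLeq)
    then obtain f where fi: "inj_on f (UNIV :: bool set)" and fs: "f ` UNIV \<subseteq> {z}" by blast
    have "f True = z" "f False = z" using fs by auto
    then have "f True = f False" by simp
    then have "True = False" using fi unfolding inj_on_def by blast
    then show False by simp
  qed
  have W1: "Well_order |{z}|" by (rule card_of_Well_order)
  have W2: "Well_order |UNIV :: bool set|" by (rule card_of_Well_order)
  have "|{z}| <o |UNIV :: bool set|" using not_ordLeq_iff_ordLess[OF W1 W2] nle by simp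
  then show ?thesis unfolding ctwo_def .
qed

theorem corollary4p12:
  fixes r :: "'a rel" and s :: 'a and S :: "'a set"
  assumes kappa_card: "card_order r"
    and kappa_regular: "regularCard r"
    and kappa_uncountable: "\<not> countable (UNIV :: 'a set)"
    and sigma_card: "card_order_on (underS r s) (Restr r (underS r s))"
    and sigma_regular: "regularCard (Restr r (underS r s))"
    and sigma_uncountable: "\<not> countable (underS r s)"
    and S_sub: "S \<subseteq> E_less r s"
    and S_stat: "stationary r S"
    and principle: "curlywedge_minus r s S"
  shows "cov_eq (UNIV :: 'a set) (sigma_card r s) (sigma_card r s) BNF_Cardinal_Arithmetic.ctwo r"
proof -
  define U where "U = underS r s"
  define r' where "r' = Restr r U"
  have tr: "trans r" and an: "antisym r" and rf: "refl r" and Cr: "Card_order r"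
    and Fr: "Field r = UNIV" using wo_facts[OF kappa_card] by simp_all
  have tot: "\<forall>a b. (a,b) \<in> r \<or> (b,a) \<in> r" using wo_facts[OF kappa_card] by simp
  have Ur: "|UNIV :: 'a set| =o r" using card_of_Field_ordIso[OF Cr] Fr by simp
  have Uless: "|U| <o r" unfolding U_def using card_of_underS[OF Cr] Fr by simp
  have Uinf: "infinite U" using sigma_uncountable U_def countable_finite by blast
  have Cr': "Card_order r'" and Fr': "Field r' = U"
    using card_order_on_Card_order[OF sigma_card] unfolding r'_def U_def by auto
  have r'U: "r' =o |U|" using card_of_Field_ordIso[OF Cr'] Fr' ordIso_symmetric by fastforce
  have sing: "|{\<alpha>}| <o |U|" for \<alpha> :: 'a
    by (rule finite_ordLess_infinite) (auto simp: card_of_Well_order Field_card_of Uinf card_of_well_order_on)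
  have lower: "r \<le>o |Z|" if Zc: "cov_family (UNIV :: 'a set) (sigma_card r s) (sigma_card r s) ctwo Z" for Z :: "'a set set"
  proof (rule ccontr)
    assume "\<not> r \<le>o |Z|"
    moreover have "Well_order r" using card_order_on_well_order_on[OF kappa_card] Fr by simp
    ultimately have Zl: "|Z| <o r" using not_ordLeq_iff_ordLess[OF card_of_Well_order, of r Z] by simp
    have cov: "UNIV \<subseteq> \<Union>Z"
    proof
      fix \<alpha> :: 'a
      have "{\<alpha>} \<in> P_lt UNIV (sigma_card r s)" using sing unfolding P_lt_def sigma_card_def U_def by auto
      then obtain Q where "Q \<subseteq> Z" "{\<alpha>} \<subseteq> \<Union>Q" using Zc unfolding cov_family_def by blast
      then show "\<alpha> \<in> \<Union>Z" by blast
    qed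
    have zs: "\<forall>z\<in>Z. |z| \<le>o |U|"
      using Zc unfolding cov_family_def P_lt_def sigma_card_def U_def
      by (auto intro: ordLess_imp_ordLeq)
    have "|\<Union>Z| <o r"
    proof (cases "|Z| \<le>o |U|")
      case True
      have "|\<Union>z\<in>Z. z| \<le>o |U|" by (rule card_of_UNION_ordLeq_infinite[OF Uinf True]) (use zs in blast)
      then have "|\<Union>Z| \<le>o |U|" by simp
      then show ?thesis using Uless by (rule ordLeq_ordLess_trans)
    next
      case False
      have ZU: "|U| <o |Z|" using False not_ordLeq_iff_ordLess[OF card_of_Well_order card_of_Well_order, of Z U] by simp
      have Zinf: "infinite Z" by (rule card_of_ordLeq_infinite[OF ordLess_imp_ordLeq[OF ZU] Uinf])
      have zs2: "\<forall>z\<in>Z. |z| \<le>o |Z|"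
      proof
        fix z assume "z \<in> Z"
        then have "|z| \<le>o |U|" using zs by blast
        then show "|z| \<le>o |Z|" using ordLess_imp_ordLeq[OF ZU] by (rule ordLeq_transitive)
      qed
      have "|\<Union>z\<in>Z. z| \<le>o |Z|" by (rule card_of_UNION_ordLeq_infinite[OF Zinf ordLeq_reflexive[OF card_of_Well_order]]) (use zs2 in blast)
      then have "|\<Union>Z| \<le>o |Z|" by simp
      then show ?thesis using Zl by (rule ordLeq_ordLess_trans)
    qed
    moreover have "\<Union>Z = UNIV" using cov by blast
    ultimately have "|UNIV :: 'a set| <o r" by simp
    then show False using Ur not_ordLess_ordIso by blast
  qed
  obtain C :: "'a \<Rightarrow> 'a \<Rightarrow> 'a set set" where
    Ccof: "\<And>\<delta> i. \<delta> \<in> acc r \<Longrightarrow> (s, \<delta>) \<in> r \<Longrightarrow> olt r i \<delta> \<Longrightarrow>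
          subset_cofinal (C i \<delta>) (P_lt (underS r \<delta>) (card_of (underS r s)))"
    and Cst: "\<And>D. gen_club (card_of (underS r s)) UNIV D \<Longrightarrow>
          {\<delta> \<in> acc r. (s, \<delta>) \<in> r \<and> (\<exists>i. olt r i \<delta> \<and> C i \<delta> \<subseteq> D)} \<in> NS_restr_pos r S"
    using principle unfolding curlywedge_minus_def by blast
  define G where "G = (\<lambda>(i, \<delta>, \<nu>). \<Inter>{x \<in> C i \<delta>. underS r \<nu> \<subseteq> x})"
  define Z where "Z = G ` UNIV \<inter> P_lt UNIV (sigma_card r s)"
  have Zle: "|Z| \<le>o r"
  proof -
    have "|Z| \<le>o |G ` UNIV|" unfolding Z_def by (rule card_of_mono1) blast
    also have "|G ` UNIV| \<le>o |UNIV :: ('a \<times> 'a \<times> 'a) set|" by (rule card_of_image)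
    also have "|UNIV :: ('a \<times> 'a \<times> 'a) set| =o |UNIV :: 'a set|"
    proof -
      have inf: "infinite (UNIV :: 'a set)" using kappa_uncountable countable_finite by blast
      have "|UNIV :: ('a \<times> 'a) set| =o |UNIV :: 'a set|"
        using card_of_Times_same_infinite[OF inf] by simp
      then have "|UNIV :: ('a \<times> 'a) set| \<le>o |UNIV :: 'a set|" using ordIso_imp_ordLeq by blast
      then have "|(UNIV :: 'a set) \<times> (UNIV :: ('a \<times> 'a) set)| =o |UNIV :: 'a set|"
        using card_of_Times_infinite_simps(1)[OF inf, of "UNIV :: ('a \<times> 'a) set"] by simp
      then show ?thesis by simp
    qed
    also have "|UNIV :: 'a set| =o r" by (rule Ur)
    finally show ?thesis .
  qed
  have Zcov: "cov_family (UNIV :: 'a set) (sigma_card r s) (sigma_card r s) ctwo Z"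
    unfolding cov_family_def
  proof (intro conjI ballI)
    show "Z \<subseteq> P_lt UNIV (sigma_card r s)" unfolding Z_def by blast
  next
    fix a :: "'a set" assume aP: "a \<in> P_lt UNIV (sigma_card r s)"
    then have al: "|a| <o |U|" unfolding P_lt_def sigma_card_def U_def by auto
    have "\<exists>f. inj_on f a \<and> f ` a \<subseteq> U" unfolding card_of_ordLeq by (rule ordLess_imp_ordLeq[OF al])
    then obtain f where finj: "inj_on f a" and fU: "f ` a \<subseteq> U" by blast
    have fal0: "|f ` a| <o |U|" by (rule ordLeq_ordLess_trans[OF card_of_image al])
    have fal: "|f ` a| <o r'" by (rule ordLess_ordIso_trans[OF fal0 ordIso_symmetric[OF r'U]])
    have RC: "regularCard r'" using sigma_regular unfolding r'_def U_def .
    have "\<not> cofinal (f ` a) r'"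
    proof
      assume "cofinal (f ` a) r'"
      then have "|f ` a| =o r'" using RC fU Fr' unfolding regularCard_def by auto
      then show False using not_ordLess_ordIso[OF fal] by simp
    qed
    then obtain \<nu>0 where \<nu>0U: "\<nu>0 \<in> U" and \<nu>0b: "\<forall>b\<in>f ` a. \<nu>0 = b \<or> (\<nu>0, b) \<notin> r'"
      unfolding cofinal_def Fr' by blast
    obtain \<nu> where \<nu>U: "\<nu> \<in> U" and \<nu>0\<nu>: "\<nu>0 \<noteq> \<nu>" "(\<nu>0, \<nu>) \<in> r'"
      using infinite_Card_order_limit[OF Cr'] Fr' Uinf \<nu>0U by blast
    have fa\<nu>: "f ` a \<subseteq> underS r \<nu>"
    proof
      fix b assume bfa: "b \<in> f ` a"
      then have bU: "b \<in> U" using fU by blast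
      have "(b, \<nu>0) \<in> r"
      proof -
        have "b = \<nu>0 \<or> (b, \<nu>0) \<in> r \<or> (\<nu>0, b) \<in> r" using tot by blast
        then show ?thesis using \<nu>0b bfa bU \<nu>0U rf unfolding r'_def refl_on_def by auto
      qed
      moreover have "(\<nu>0, \<nu>) \<in> r" using \<nu>0\<nu> unfolding r'_def by blast
      ultimately have "(b, \<nu>) \<in> r" using tr unfolding trans_def by blast
      moreover have "b \<noteq> \<nu>"
      proof
        assume "b = \<nu>"
        then have "(\<nu>, \<nu>0) \<in> r" using \<open>(b, \<nu>0) \<in> r\<close> by simp
        then show False using \<nu>0\<nu> an unfolding antisym_def r'_def by blast
      qed
      ultimately show "b \<in> underS r \<nu>" unfolding underS_def by blast
    qed
    have \<nu>small: "|underS r \<nu>| <o |U|"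
    proof -
      have "underS r' \<nu> = underS r \<nu>"
      proof -
        have "\<nu> \<in> underS r s" using \<nu>U U_def by simp
        then show ?thesis unfolding r'_def U_def underS_def using tr an
          unfolding trans_def antisym_def by blast
      qed
      moreover have "|underS r' \<nu>| <o r'" using card_of_underS[OF Cr'] Fr' \<nu>U by blast
      ultimately show ?thesis using r'U ordLess_ordIso_trans by fastforce
    qed
    define F where "F = (\<lambda>y. inv_into a f (the_elem y))"
    define D where "D = {x \<in> P_lt (UNIV :: 'a set) (card_of (underS r s)). \<forall>y. finite y \<and> y \<subseteq> x \<longrightarrow> F y \<in> x}"
    have "gen_club (card_of (underS r s)) UNIV D" unfolding gen_club_def D_def by blast
    then have "{\<delta> \<in> acc r. (s, \<delta>) \<in> r \<and> (\<exists>i. olt r i \<delta> \<and> C i \<delta> \<subseteq> D)} \<in> NS_restr_pos r S"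
      by (rule Cst)
    then have st: "stationary r ({\<delta> \<in> acc r. (s, \<delta>) \<in> r \<and> (\<exists>i. olt r i \<delta> \<and> C i \<delta> \<subseteq> D)} \<inter> S)"
      unfolding NS_restr_pos_def NS_restr_def by blast
    have "club r UNIV" unfolding club_def using rf unfolding refl_on_def by blast
    then obtain \<delta> where \<delta>: "\<delta> \<in> acc r" "(s, \<delta>) \<in> r" "\<exists>i. olt r i \<delta> \<and> C i \<delta> \<subseteq> D"
      using st unfolding stationary_def by blast
    then obtain i where i: "olt r i \<delta>" "C i \<delta> \<subseteq> D" by blast
    have cof: "subset_cofinal (C i \<delta>) (P_lt (underS r \<delta>) (card_of (underS r s)))"
      using Ccof \<delta> i by blast
    have sub\<delta>: "underS r \<nu> \<subseteq> underS r \<delta>"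
    proof
      fix x assume "x \<in> underS r \<nu>"
      then have x\<nu>: "(x, \<nu>) \<in> r" "x \<noteq> \<nu>" unfolding underS_def by auto
      have \<nu>s: "(\<nu>, s) \<in> r" "\<nu> \<noteq> s" using \<nu>U unfolding U_def underS_def by auto
      have "(x, \<delta>) \<in> r" using x\<nu> \<nu>s \<delta>(2) tr unfolding trans_def by blast
      moreover have "x \<noteq> \<delta>"
      proof
        assume "x = \<delta>"
        then have "(s, \<nu>) \<in> r" using \<delta>(2) x\<nu> tr unfolding trans_def by blast
        then show False using \<nu>s an unfolding antisym_def by blast
      qed
      ultimately show "x \<in> underS r \<delta>" unfolding underS_def by blast
    qed
    have "underS r \<nu> \<in> P_lt (underS r \<delta>) (card_of (underS r s))"
      using sub\<delta> \<nu>small unfolding P_lt_def U_def by blast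
    then obtain x0 where x0: "x0 \<in> C i \<delta>" "underS r \<nu> \<subseteq> x0"
      using cof unfolding subset_cofinal_def by blast
    have x0P: "x0 \<in> P_lt (underS r \<delta>) (card_of (underS r s))"
      using cof x0 unfolding subset_cofinal_def by blast
    define z where "z = G (i, \<delta>, \<nu>)"
    have zx0: "z \<subseteq> x0" unfolding z_def G_def using x0 by blast
    have zl: "|z| <o card_of (underS r s)"
      using card_of_mono1[OF zx0] x0P unfolding P_lt_def using ordLeq_ordLess_trans by blast
    moreover have "z \<in> range G" unfolding z_def by (rule rangeI)
    ultimately have zZ: "z \<in> Z" unfolding Z_def P_lt_def sigma_card_def by blast
    have az: "a \<subseteq> z"
    proof
      fix \<alpha> assume \<alpha>a: "\<alpha> \<in> a"
      show "\<alpha> \<in> z" unfolding z_def G_def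
      proof (simp, intro allI impI)
        fix x assume x: "x \<in> C i \<delta> \<and> underS r \<nu> \<subseteq> x"
        then have xD: "x \<in> D" using i by blast
        have "{f \<alpha>} \<subseteq> x" using x fa\<nu> \<alpha>a by blast
        then have "F {f \<alpha>} \<in> x" using xD unfolding D_def by blast
        moreover have "F {f \<alpha>} = \<alpha>" unfolding F_def using finj \<alpha>a by simp
        ultimately show "\<alpha> \<in> x" by simp
      qed
    qed
    show "\<exists>Q. Q \<subseteq> Z \<and> |Q| <o ctwo \<and> a \<subseteq> \<Union>Q"
      using zZ az singl_less_ctwo by (intro exI[of _ "{z}"]) auto
  qed
  show ?thesis unfolding cov_eq_def
  proof (intro conjI exI allI impI)
    show "cov_family UNIV (sigma_card r s) (sigma_card r s) ctwo Z" by (rule Zcov)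
    show "|Z| =o r" using Zle lower[OF Zcov] ordIso_iff_ordLeq by blast
  next
    fix Z' :: "'a set set" assume "cov_family UNIV (sigma_card r s) (sigma_card r s) ctwo Z'"
    then show "r \<le>o |Z'|" by (rule lower)
  qed
qed

end
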